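(* There exist a point $x\in\{0,1\}^{\mathbb{N}}$ such that, for the full shift $(\{0,1\}^{\mathbb{N}},S)$, $V^{\log}(x)\subsetneq V(x)$.
   Context: $S$ is the left shift. For $N\ge1$ let $\mathrm{Emp}(x,N)=\frac1N\sum_{n=1}^N\delta_{S^{n-1}(x)}$, and for $N\ge2$ let $\mathrm{Emp}^{\log}(x,N)=\frac1{\log N}\sum_{n=1}^N\frac1n\delta_{S^{n-1}(x)}$. $V(x)$ (resp. $V^{\log}(x)$) is the set of Borel probability measures $\nu$ such that $\mathrm{Emp}(x,N_k)\to\nu$ (resp. $\mathrm{Emp}^{\log}(x,N_k)\to\nu$) weak-$*$ for some increasing sequence $(N_k)$. *)

theory Defs
  imports "HOL-Probability.Probability"
begin

text \<open>The full shift on {0,1}^N, modelled as nat => bool with the product topology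
  (Function_Topology) and its Borel sigma-algebra.\<close>

type_synonym cantor = "nat \<Rightarrow> bool"

definition shift :: "cantor \<Rightarrow> cantor" where
  "shift x = (\<lambda>n. x (Suc n))"

definition Emp :: "cantor \<Rightarrow> nat \<Rightarrow> cantor measure" where
  "Emp x N = measure_of UNIV (sets (borel :: cantor measure))
     (\<lambda>A. ennreal ((1 / real N) * (\<Sum>n=1..N. indicator A ((shift ^^ (n - 1)) x))))"

text \<open>Emp_log(x,N) = (1/log N) sum_{n=1}^N (1/n) delta_{S^(n-1) x}  (meaningful for N >= 2)\<close>
definition Emp_log :: "cantor \<Rightarrow> nat \<Rightarrow> cantor measure" where
  "Emp_log x N = measure_of UNIV (sets (borel :: cantor measure))
     (\<lambda>A. ennreal ((1 / ln (real N)) * (\<Sum>n=1..N. (1 / real n) * indicator A ((shift ^^ (n - 1)) x))))"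

definition weak_star_conv :: "(nat \<Rightarrow> cantor measure) \<Rightarrow> cantor measure \<Rightarrow> bool" where
  "weak_star_conv \<mu> \<nu> \<longleftrightarrow>
     (\<forall>f :: cantor \<Rightarrow> real. continuous_on UNIV f \<and> bounded (range f) \<longrightarrow>
        (\<lambda>k. integral\<^sup>L (\<mu> k) f) \<longlonglongrightarrow> integral\<^sup>L \<nu> f)"

definition borel_prob :: "cantor measure \<Rightarrow> bool" where
  "borel_prob \<nu> \<longleftrightarrow> prob_space \<nu> \<and> sets \<nu> = sets (borel :: cantor measure)"

definition V :: "cantor \<Rightarrow> cantor measure set" where
  "V x = {\<nu>. borel_prob \<nu> \<and> (\<exists>Nk :: nat \<Rightarrow> nat. strict_mono Nk \<and>
              weak_star_conv (\<lambda>k. Emp x (Nk k)) \<nu>)}"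

definition V_log :: "cantor \<Rightarrow> cantor measure set" where
  "V_log x = {\<nu>. borel_prob \<nu> \<and> (\<exists>Nk :: nat \<Rightarrow> nat. strict_mono Nk \<and>
              weak_star_conv (\<lambda>k. Emp_log x (Nk k)) \<nu>)}"

end

theory Submission
  imports Defs "HOL-Real_Asymp.Real_Asymp"
begin


lemma integral_mof:
  fixes w :: "nat \<Rightarrow> real" and g :: "nat \<Rightarrow> cantor" and f :: "cantor \<Rightarrow> real"
  assumes I: "finite I" and w: "\<And>n. n\<in>I \<Longrightarrow> 0 \<le> w n" and f: "continuous_on UNIV f"
  shows "integral\<^sup>L (measure_of UNIV (sets borel) (\<lambda>B. ennreal (\<Sum>n\<in>I. w n * indicator B (g n)))) f
          = (\<Sum>n\<in>I. w n * f (g n))"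
proof -
  let ?P = "point_measure I (\<lambda>n. ennreal (w n))"
  have sp: "space ?P = I" by (simp add: space_point_measure)
  have eq: "measure_of UNIV (sets borel) (\<lambda>B. ennreal (\<Sum>n\<in>I. w n * indicator B (g n))) = distr ?P borel g"
    unfolding distr_def sp space_borel
  proof (intro arg_cong[where f="measure_of UNIV (sets borel)"] ext)
    fix B
    have "emeasure ?P (g -` B \<inter> I) = (\<Sum>a\<in>g -` B \<inter> I. ennreal (w a))"
      using I by (intro emeasure_point_measure_finite) auto
    also have "\<dots> = ennreal (\<Sum>a\<in>g -` B \<inter> I. w a)" using w by (intro sum_ennreal) auto
    also have "(\<Sum>a\<in>g -` B \<inter> I. w a) = (\<Sum>n\<in>I. w n * indicator B (g n))"
    proof -
      have "g -` B \<inter> I = I \<inter> {n. g n \<in> B}" by auto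
      then show ?thesis using I by (simp add: sum.inter_restrict indicator_def)
    qed
    finally show "ennreal (\<Sum>n\<in>I. w n * indicator B (g n)) = emeasure ?P (g -` B \<inter> I)" by simp
  qed
  have "integral\<^sup>L (distr ?P borel g) f = integral\<^sup>L ?P (\<lambda>n. f (g n))"
    by (intro integral_distr borel_measurable_continuous_onI f) simp
  also have "\<dots> = integral\<^sup>L (count_space I) (\<lambda>n. w n *\<^sub>R f (g n))"
    unfolding point_measure_def
    by (intro integral_density) (auto simp: AE_count_space w)
  also have "\<dots> = (\<Sum>n\<in>I. w n * f (g n))"
    using I by (simp add: lebesgue_integral_count_space_finite)
  finally show ?thesis using eq by simp
qed

lemma cylinder:
  fixes f :: "cantor \<Rightarrow> real"
  assumes f: "continuous_on UNIV f" and e: "e > 0"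
  shows "\<exists>m. \<forall>y. (\<forall>i\<le>m. y i = z i) \<longrightarrow> \<bar>f y - f z\<bar> < e"
proof -
  let ?S = "f -` ball (f z) e"
  have "open ?S" using f by (simp add: open_vimage)
  then have "openin (product_topology (\<lambda>i. euclidean) UNIV) ?S" by (simp add: open_fun_def)
  moreover have "z \<in> ?S" using e by simp
  ultimately obtain U where U: "finite {i. U i \<noteq> UNIV}" "z \<in> Pi\<^sub>E UNIV U" "Pi\<^sub>E UNIV U \<subseteq> ?S"
    unfolding openin_product_topology_alt by force
  define m where "m = Max (insert 0 {i. U i \<noteq> UNIV})"
  have "\<bar>f y - f z\<bar> < e" if y: "\<forall>i\<le>m. y i = z i" for y
  proof -
    have "y \<in> Pi\<^sub>E UNIV U"
    proof (unfold PiE_iff, intro conjI ballI)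
      fix i :: nat
      show "y i \<in> U i"
      proof (cases "U i = UNIV")
        case False
        then have "i \<le> m" unfolding m_def using U(1) by (intro Max_ge) auto
        then show ?thesis using y U(2) by (auto simp: PiE_iff)
      qed simp
    qed simp
    then have "y \<in> ?S" using U(3) by blast
    then show ?thesis by (simp add: dist_real_def abs_minus_commute)
  qed
  then show ?thesis by blast
qed

lemma shift_pow: "(shift ^^ j) x = (\<lambda>i. x (i + j))"
  by (induction j arbitrary: x) (auto simp: shift_def funpow_Suc_right)



definition nb :: "nat \<Rightarrow> nat" where "nb k = 2^(k*k)"
definition xx :: cantor where "xx j = (\<exists>k. nb k \<le> j \<and> j < 2 * nb k)"

lemma nb_mono: "k \<le> l \<Longrightarrow> nb k \<le> nb l"
  unfolding nb_def by (intro power_increasing) (auto intro: mult_le_mono)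

lemma nb_pos: "nb k \<ge> 1" unfolding nb_def by simp

lemma nb_Suc: "nb (Suc k) = nb k * 2^(2*k+1)"
  unfolding nb_def by (simp add: power_add[symmetric] algebra_simps)

lemma two_nb_le: "2 * nb k \<le> nb (Suc k)"
proof -
  have "(2::nat)^1 \<le> 2^(2*k+1)" by (rule power_increasing) auto
  then show ?thesis using nb_Suc[of k] nb_pos[of k] by (simp add: mult.commute)
qed

lemma bad0_below:
  assumes "\<exists>i\<le>m. xx (i+j)" "j < nb (Suc k)"
  shows "j < 2*nb k \<or> nb (Suc k) \<le> j + m"
proof -
  obtain i l where il: "i \<le> m" "nb l \<le> i + j" "i + j < 2 * nb l" using assms(1) unfolding xx_def by blast
  show ?thesis
  proof (cases "l \<le> k")
    case True
    then have "2 * nb l \<le> 2 * nb k" using nb_mono by simp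
    then show ?thesis using il by linarith
  next
    case False
    then have "nb (Suc k) \<le> nb l" using nb_mono by simp
    then show ?thesis using il by linarith
  qed
qed

lemma good1: assumes "nb k \<le> j" "j + m < 2*nb k" shows "\<forall>i\<le>m. xx (i+j)"
proof (intro allI impI)
  fix i assume "i \<le> m"
  then show "xx (i+j)" unfolding xx_def using assms by (intro exI[of _ k]) auto
qed

lemma avg_bound:
  fixes a w :: "nat \<Rightarrow> real"
  assumes A: "finite A" and w: "\<forall>j\<in>A. 0 \<le> w j" and D: "\<forall>j\<in>A. \<bar>a j - c\<bar> \<le> D"
    and e: "0 \<le> e" and good: "\<forall>j\<in>A. j \<notin> Bad \<longrightarrow> \<bar>a j - c\<bar> \<le> e"
  shows "\<bar>\<Sum>j\<in>A. w j * (a j - c)\<bar> \<le> e * (\<Sum>j\<in>A. w j) + D * (\<Sum>j\<in>A\<inter>Bad. w j)"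
proof -
  have "\<bar>\<Sum>j\<in>A. w j * (a j - c)\<bar> \<le> (\<Sum>j\<in>A. \<bar>w j * (a j - c)\<bar>)" by (rule sum_abs)
  also have "\<dots> \<le> (\<Sum>j\<in>A. e * w j + D * (if j \<in> Bad then w j else 0))"
  proof (rule sum_mono)
    fix j assume j: "j \<in> A"
    have wj: "0 \<le> w j" using w j by auto
    have "\<bar>w j * (a j - c)\<bar> = w j * \<bar>a j - c\<bar>" using wj by (simp add: abs_mult)
    also have "\<dots> \<le> w j * (e + (if j \<in> Bad then D else 0))"
      using good D j e by (intro mult_left_mono wj) auto
    finally show "\<bar>w j * (a j - c)\<bar> \<le> e * w j + D * (if j \<in> Bad then w j else 0)"
      by (auto simp: algebra_simps)
  qed
  also have "\<dots> = e * (\<Sum>j\<in>A. w j) + D * (\<Sum>j\<in>A. if j \<in> Bad then w j else 0)"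
    by (simp only: sum.distrib sum_distrib_left)
  also have "(\<Sum>j\<in>A. if j \<in> Bad then w j else 0) = (\<Sum>j\<in>A\<inter>Bad. w j)"
    using A sum.inter_restrict[of A w Bad] by simp
  finally show ?thesis .
qed

lemma approx_tendsto:
  fixes u :: "nat \<Rightarrow> real"
  assumes "\<And>e. e > 0 \<Longrightarrow> \<exists>r. r \<longlonglongrightarrow> 0 \<and> eventually (\<lambda>k. \<bar>u k - L\<bar> \<le> e + r k) sequentially"
  shows "u \<longlonglongrightarrow> L"
proof (unfold tendsto_iff, intro allI impI)
  fix e :: real assume e: "e > 0"
  obtain r where r: "r \<longlonglongrightarrow> 0" "eventually (\<lambda>k. \<bar>u k - L\<bar> \<le> e/2 + r k) sequentially"
    using assms[of "e/2"] e by auto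
  from r(1) have "\<forall>\<epsilon>>0. eventually (\<lambda>k. dist (r k) 0 < \<epsilon>) sequentially" by (simp only: tendsto_iff)
  then have "eventually (\<lambda>k. dist (r k) 0 < e/2) sequentially" using e by (meson half_gt_zero)
  with r(2) show "eventually (\<lambda>k. dist (u k) L < e) sequentially"
    by eventually_elim (auto simp: dist_real_def)
qed

lemma sum_shift1: "(\<Sum>n\<in>{1..N::nat}. h (n-1)) = (\<Sum>j<N. (h j)::real)"
  by (induction N) (auto simp: atLeastAtMostSuc_conv)

lemma emp_int:
  assumes f: "continuous_on UNIV f"
  shows "integral\<^sup>L (Emp x N) f = (1 / real N) * (\<Sum>j<N. f ((shift^^j) x))"
proof -
  have "Emp x N = measure_of UNIV (sets borel)
      (\<lambda>B. ennreal (\<Sum>n\<in>{1..N}. (1 / real N) * indicator B ((shift ^^ (n - 1)) x)))"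
    unfolding Emp_def by (simp add: sum_distrib_left)
  then have "integral\<^sup>L (Emp x N) f = (\<Sum>n\<in>{1..N}. (1 / real N) * f ((shift ^^ (n - 1)) x))"
    using integral_mof[OF _ _ f, of "{1..N}" "\<lambda>_. 1 / real N" "\<lambda>n. (shift ^^ (n - 1)) x"] by simp
  also have "\<dots> = (1 / real N) * (\<Sum>n\<in>{1..N}. f ((shift ^^ (n - 1)) x))"
    by (simp only: sum_distrib_left)
  also have "\<dots> = (1 / real N) * (\<Sum>j<N. f ((shift^^j) x))"
    by (simp only: sum_shift1[where h="\<lambda>j. f ((shift^^j) x)"])
  finally show ?thesis .
qed

lemma emplog_int:
  assumes f: "continuous_on UNIV f"
  shows "integral\<^sup>L (Emp_log x N) f = (1 / ln (real N)) * (\<Sum>j<N. f ((shift^^j) x) / real (Suc j))"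
proof -
  have "Emp_log x N = measure_of UNIV (sets borel)
      (\<lambda>B. ennreal (\<Sum>n\<in>{1..N}. (1 / ln (real N) * (1 / real n)) * indicator B ((shift ^^ (n - 1)) x)))"
    unfolding Emp_log_def by (simp add: sum_distrib_left mult.assoc)
  then have "integral\<^sup>L (Emp_log x N) f = (\<Sum>n\<in>{1..N}. (1 / ln (real N) * (1 / real n)) * f ((shift ^^ (n - 1)) x))"
    using integral_mof[OF _ _ f, of "{1..N}" "\<lambda>n. 1 / ln (real N) * (1 / real n)" "\<lambda>n. (shift ^^ (n - 1)) x"]
    by simp
  also have "\<dots> = (1 / ln (real N)) * (\<Sum>n\<in>{1..N}. f ((shift ^^ (n - 1)) x) / real (Suc (n-1)))"
    by (simp add: sum_distrib_left)
  also have "\<dots> = (1 / ln (real N)) * (\<Sum>j<N. f ((shift^^j) x) / real (Suc j))"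
    by (simp only: sum_shift1[where h="\<lambda>j. f ((shift^^j) x) / real (Suc j)"])
  finally show ?thesis .
qed



lemma bound_f:
  fixes f :: "cantor \<Rightarrow> real"
  assumes "bounded (range f)"
  obtains B where "\<And>y. \<bar>f y\<bar> \<le> B" "0 \<le> B"
proof -
  obtain B where "\<forall>y\<in>range f. norm y \<le> B" using assms bounded_iff by metis
  then have "\<And>y. \<bar>f y\<bar> \<le> B" by auto
  moreover have "0 \<le> B" using calculation[of undefined] by linarith
  ultimately show ?thesis using that by blast
qed

lemma interval_sum_bound:
  "(\<Sum>j\<in>{nb l - m..<2*nb l}. 1 / real (Suc j)) \<le> real (2*m+1)"
proof -
  let ?a = "nb l - m"
  have "(\<Sum>j\<in>{?a..<2*nb l}. 1 / real (Suc j)) \<le> of_nat (card {?a..<2*nb l}) * (1 / real (Suc ?a))"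
    by (rule sum_bounded_above) (auto simp: frac_le)
  also have "card {?a..<2*nb l} = 2*nb l - ?a" by simp
  also have "2*nb l - ?a \<le> (2*m+1) * Suc ?a"
  proof (cases "m \<le> nb l")
    case True
    then show ?thesis by auto
  next
    case False
    then show ?thesis by auto
  qed
  then have "real (2*nb l - ?a) \<le> real (2*m+1) * real (Suc ?a)"
    by (metis of_nat_le_iff of_nat_mult)
  then have "real (2*nb l - ?a) * (1 / real (Suc ?a)) \<le> real (2*m+1)"
    by (simp add: divide_simps)
  finally show ?thesis .
qed

lemma bs_bound:
  assumes N: "N \<ge> 1"
  shows "(\<Sum>j\<in>{..<N} \<inter> {j. \<exists>i\<le>m. xx(i+j)}. 1 / real (Suc j))
          \<le> real (2*m+1) * (sqrt (log 2 (real N + real m)) + 1)"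
proof -
  define I where "I l = {nb l - m..<2*nb l}" for l
  define t where "t = sqrt (log 2 (real N + real m))"
  define K where "K = nat \<lceil>t\<rceil>"
  define w where "w j = 1 / real (Suc j)" for j
  have t0: "0 \<le> t" unfolding t_def using N by simp
  have w0: "0 \<le> w j" for j unfolding w_def by simp
  have "(\<Sum>j\<in>{..<N} \<inter> {j. \<exists>i\<le>m. xx(i+j)}. w j) = (\<Sum>j<N. if j \<in> {j. \<exists>i\<le>m. xx(i+j)} then w j else 0)"
    by (rule sum.inter_restrict) simp
  also have "\<dots> \<le> (\<Sum>j<N. \<Sum>l<K. if j \<in> I l then w j else 0)"
  proof (rule sum_mono)
    fix j assume j: "j \<in> {..<N}"
    show "(if j \<in> {j. \<exists>i\<le>m. xx(i+j)} then w j else 0) \<le> (\<Sum>l<K. if j \<in> I l then w j else 0)"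
    proof (cases "\<exists>i\<le>m. xx(i+j)")
      case True
      then obtain i l where il: "i \<le> m" "nb l \<le> i + j" "i + j < 2 * nb l" unfolding xx_def by blast
      have jI: "j \<in> I l" unfolding I_def using il by auto
      have "2^(l*l) < N + m" using il j unfolding nb_def by auto
      then have "real (l*l) < log 2 (real (N + m))" by (rule less_log2_of_power)
      then have "(real l)^2 < log 2 (real N + real m)" by (simp add: power2_eq_square)
      then have "real l < t" unfolding t_def by (rule real_less_rsqrt)
      then have "l < K" unfolding K_def by linarith
      then have "(if j \<in> I l then w j else 0) \<le> (\<Sum>l<K. if j \<in> I l then w j else 0)"
        by (intro member_le_sum) (auto simp: w0)
      then show ?thesis using True jI by simp
    qed (auto simp add: sum_nonneg w0)
  qed
  also have "\<dots> = (\<Sum>l<K. \<Sum>j<N. if j \<in> I l then w j else 0)" by (rule sum.swap)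
  also have "\<dots> \<le> (\<Sum>l<K. real (2*m+1))"
  proof (rule sum_mono)
    fix l
    have "(\<Sum>j<N. if j \<in> I l then w j else 0) = (\<Sum>j\<in>{..<N} \<inter> I l. w j)"
      by (rule sum.inter_restrict[symmetric]) simp
    also have "\<dots> \<le> (\<Sum>j\<in>I l. w j)"
      by (rule sum_mono2) (auto simp: I_def w0)
    also have "\<dots> \<le> real (2*m+1)" unfolding I_def w_def by (rule interval_sum_bound)
    finally show "(\<Sum>j<N. if j \<in> I l then w j else 0) \<le> real (2*m+1)" .
  qed
  also have "\<dots> = real K * real (2*m+1)" by simp
  also have "\<dots> \<le> (t + 1) * real (2*m+1)"
    using t0 unfolding K_def by (intro mult_right_mono) linarith+
  finally show ?thesis unfolding w_def t_def by (simp add: mult.commute)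
qed

lemma harm_ln: "(\<lambda>N. harm N / ln (real N)) \<longlonglongrightarrow> 1"
proof -
  obtain g where g: "(\<lambda>n. harm n - ln (real n)) \<longlonglongrightarrow> g"
    using euler_mascheroni_convergent convergent_def by blast
  have "filterlim (\<lambda>n. ln (real n)) at_infinity sequentially"
    by (rule filterlim_at_top_imp_at_infinity) real_asymp
  then have "(\<lambda>n. (harm n - ln (real n)) / ln (real n)) \<longlonglongrightarrow> 0"
    by (rule tendsto_divide_0[OF g])
  then have "(\<lambda>n. 1 + (harm n - ln (real n)) / ln (real n)) \<longlonglongrightarrow> 1 + 0"
    by (intro tendsto_add) auto
  moreover have "eventually (\<lambda>n. 1 + (harm n - ln (real n)) / ln (real n) = harm n / ln (real n)) sequentially"
    using eventually_ge_at_top[of 2]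
    by eventually_elim (auto simp: field_simps)
  ultimately show ?thesis using tendsto_cong by force
qed



lemma mean_bound:
  fixes a :: "nat \<Rightarrow> real"
  assumes A: "finite A" "card A > 0" and D: "\<forall>j\<in>A. \<bar>a j - c\<bar> \<le> D" and e: "0 \<le> e"
    and good: "\<forall>j\<in>A. j \<notin> Bad \<longrightarrow> \<bar>a j - c\<bar> \<le> e" and q: "card (A \<inter> Bad) \<le> q" and D0: "0 \<le> D"
  shows "\<bar>(1 / real (card A)) * (\<Sum>j\<in>A. a j) - c\<bar> \<le> e + D * real q / real (card A)"
proof -
  let ?n = "real (card A)"
  have n: "?n > 0" using A by simp
  have "(1 / ?n) * (\<Sum>j\<in>A. a j) - c = (1 / ?n) * (\<Sum>j\<in>A. 1 * (a j - c))"
    using n by (simp add: sum_subtractf field_simps)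
  moreover have "\<bar>\<Sum>j\<in>A. 1 * (a j - c)\<bar> \<le> e * (\<Sum>j\<in>A. 1) + D * (\<Sum>j\<in>A\<inter>Bad. 1)"
    by (rule avg_bound) (use A D e good in auto)
  moreover have "(\<Sum>j\<in>A\<inter>Bad. (1::real)) \<le> real q" using q by simp
  moreover have "D * (\<Sum>j\<in>A\<inter>Bad. (1::real)) \<le> D * real q" using q D0 by (intro mult_left_mono) auto
  ultimately have S: "\<bar>\<Sum>j\<in>A. 1 * (a j - c)\<bar> \<le> e * ?n + D * real q" by simp
  have "\<bar>(1 / ?n) * (\<Sum>j\<in>A. a j) - c\<bar> = (1 / ?n) * \<bar>\<Sum>j\<in>A. 1 * (a j - c)\<bar>"
    using \<open>(1 / ?n) * (\<Sum>j\<in>A. a j) - c = (1 / ?n) * (\<Sum>j\<in>A. 1 * (a j - c))\<close> n by (simp add: abs_mult)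
  also have "\<dots> \<le> (1 / ?n) * (e * ?n + D * real q)" using S n by (intro mult_left_mono) auto
  also have "\<dots> = e + D * real q / ?n" using n by (simp add: field_simps)
  finally show ?thesis .
qed

lemma nb_ge: "real (Suc k) \<le> real (nb (Suc k))"
proof -
  have "Suc k < 2^(Suc k)" by (rule less_exp)
  also have "(2::nat)^(Suc k) \<le> 2^(Suc k * Suc k)" by (rule power_increasing) auto
  finally have "Suc k \<le> nb (Suc k)" unfolding nb_def by simp
  then show ?thesis by (simp only: of_nat_le_iff)
qed

lemma nb_ratio: "real (2*nb k + m) * real (Suc k) \<le> real (2+m) * real (nb (Suc k))"
proof -
  have "2*nb k + m \<le> (2+m) * nb k" using nb_pos[of k] by (simp add: algebra_simps)
  moreover have "Suc k \<le> 2^(2*k+1)"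
  proof -
    have "Suc k < 2^(Suc k)" by (rule less_exp)
    also have "(2::nat)^(Suc k) \<le> 2^(2*k+1)" by (rule power_increasing) auto
    finally show ?thesis by simp
  qed
  ultimately have "(2*nb k + m) * Suc k \<le> (2+m) * nb k * 2^(2*k+1)" by (intro mult_le_mono) auto
  then have "(2*nb k + m) * Suc k \<le> (2+m) * nb (Suc k)" by (simp only: nb_Suc mult.assoc)
  then show ?thesis by (metis of_nat_le_iff of_nat_mult)
qed

lemma const_over: "(\<lambda>k. (c::real) / real (Suc k)) \<longlonglongrightarrow> 0"
  by real_asymp

lemma cesA:
  fixes f :: "cantor \<Rightarrow> real"
  assumes f: "continuous_on UNIV f" "bounded (range f)"
  shows "(\<lambda>k. (1 / real (nb (Suc k))) * (\<Sum>j<nb (Suc k). f ((shift^^j) xx))) \<longlonglongrightarrow> f (\<lambda>_. False)"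
proof (rule approx_tendsto)
  obtain B where B: "\<And>y. \<bar>f y\<bar> \<le> B" "0 \<le> B" using bound_f[OF f(2)] by blast
  fix e :: real assume e: "e > 0"
  obtain m where m: "\<forall>y. (\<forall>i\<le>m. y i = False) \<longrightarrow> \<bar>f y - f (\<lambda>_. False)\<bar> < e"
    using cylinder[OF f(1) e, of "\<lambda>_. False"] by blast
  define r where "r k = 2*B*real (2*nb k + m) / real (nb (Suc k))" for k
  have r0: "0 \<le> r k" for k unfolding r_def using B by simp
  have rle: "r k \<le> 2*B*real(2+m) / real (Suc k)" for k
  proof -
    have p: "real (nb (Suc k)) > 0" using nb_pos[of "Suc k"] by simp
    have "r k = 2*B * (real (2*nb k + m) / real (nb (Suc k)))" unfolding r_def by simp
    also have "real (2*nb k + m) / real (nb (Suc k)) \<le> real(2+m) / real (Suc k)"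
      using nb_ratio[of k m] p by (simp add: divide_simps)
    then have "2*B * (real (2*nb k + m) / real (nb (Suc k))) \<le> 2*B * (real(2+m) / real (Suc k))"
      using B by (intro mult_left_mono) auto
    finally show ?thesis by simp
  qed
  have "r \<longlonglongrightarrow> 0"
    by (rule tendsto_sandwich[of "\<lambda>_. 0" _ _ "\<lambda>k. 2*B*real(2+m) / real (Suc k)"])
       (use r0 rle const_over in auto)
  moreover have "\<bar>(1 / real (nb (Suc k))) * (\<Sum>j<nb (Suc k). f ((shift^^j) xx)) - f (\<lambda>_. False)\<bar> \<le> e + r k" for k
  proof -
    let ?M = "nb (Suc k)"
    let ?Bad = "{j. \<exists>i\<le>m. xx (i+j)}"
    have card: "card ({..<?M} \<inter> ?Bad) \<le> 2*nb k + m"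
    proof -
      have "{..<?M} \<inter> ?Bad \<subseteq> {..<2*nb k} \<union> {?M - m..<?M}"
        using bad0_below[of m _ k] by fastforce
      then have "card ({..<?M} \<inter> ?Bad) \<le> card ({..<2*nb k} \<union> {?M - m..<?M})"
        by (intro card_mono) auto
      also have "\<dots> \<le> card {..<2*nb k} + card {?M - m..<?M}" by (rule card_Un_le)
      finally show ?thesis by simp
    qed
    have "\<bar>(1 / real (card {..<?M})) * (\<Sum>j\<in>{..<?M}. f ((shift^^j) xx)) - f (\<lambda>_. False)\<bar>
          \<le> e + 2*B * real (2*nb k + m) / real (card {..<?M})"
    proof (rule mean_bound[where Bad="?Bad"])
      show "card {..<?M} > 0" using nb_pos[of "Suc k"] by simp
      show "\<forall>j\<in>{..<?M}. \<bar>f ((shift ^^ j) xx) - f (\<lambda>_. False)\<bar> \<le> 2*B"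
        using abs_triangle_ineq4 B(1) by (smt (verit))
      show "\<forall>j\<in>{..<?M}. j \<notin> ?Bad \<longrightarrow> \<bar>f ((shift ^^ j) xx) - f (\<lambda>_. False)\<bar> \<le> e"
        using m by (auto simp: shift_pow less_imp_le)
    qed (use e B card in auto)
    then show ?thesis unfolding r_def by simp
  qed
  ultimately show "\<exists>r. r \<longlonglongrightarrow> 0 \<and> eventually (\<lambda>k. \<bar>(1 / real (nb (Suc k))) * (\<Sum>j<nb (Suc k). f ((shift^^j) xx)) - f (\<lambda>_. False)\<bar> \<le> e + r k) sequentially"
    by (intro exI[of _ r]) auto
qed

lemma cesB:
  fixes f :: "cantor \<Rightarrow> real"
  assumes f: "continuous_on UNIV f" "bounded (range f)"
  shows "(\<lambda>k. (1 / real (nb (Suc k))) * (\<Sum>j\<in>{nb (Suc k)..<2*nb (Suc k)}. f ((shift^^j) xx))) \<longlonglongrightarrow> f (\<lambda>_. True)"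
proof (rule approx_tendsto)
  obtain B where B: "\<And>y. \<bar>f y\<bar> \<le> B" "0 \<le> B" using bound_f[OF f(2)] by blast
  fix e :: real assume e: "e > 0"
  obtain m where m: "\<forall>y. (\<forall>i\<le>m. y i = True) \<longrightarrow> \<bar>f y - f (\<lambda>_. True)\<bar> < e"
    using cylinder[OF f(1) e, of "\<lambda>_. True"] by blast
  define r where "r k = 2*B*real m / real (nb (Suc k))" for k
  have r0: "0 \<le> r k" for k unfolding r_def using B by simp
  have rle: "r k \<le> 2*B*real m / real (Suc k)" for k
    unfolding r_def using B nb_ge[of k] by (intro divide_left_mono) auto
  have "r \<longlonglongrightarrow> 0"
    by (rule tendsto_sandwich[of "\<lambda>_. 0" _ _ "\<lambda>k. 2*B*real m / real (Suc k)"])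
       (use r0 rle const_over in auto)
  moreover have "\<bar>(1 / real (nb (Suc k))) * (\<Sum>j\<in>{nb (Suc k)..<2*nb (Suc k)}. f ((shift^^j) xx)) - f (\<lambda>_. True)\<bar> \<le> e + r k" for k
  proof -
    let ?M = "nb (Suc k)"
    let ?A = "{?M..<2*?M}"
    let ?Bad = "{j. \<not> (\<forall>i\<le>m. xx (i+j))}"
    have cA: "card ?A = ?M" by simp
    have card: "card (?A \<inter> ?Bad) \<le> m"
    proof -
      have "?A \<inter> ?Bad \<subseteq> {2*?M - m..<2*?M}"
      proof
        fix j assume j: "j \<in> ?A \<inter> ?Bad"
        have "\<not> j + m < 2*?M" using j good1[of "Suc k" j m] by auto
        then show "j \<in> {2*?M - m..<2*?M}" using j by auto
      qed
      then have "card (?A \<inter> ?Bad) \<le> card {2*?M - m..<2*?M}" by (intro card_mono) auto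
      then show ?thesis by simp
    qed
    have "\<bar>(1 / real (card ?A)) * (\<Sum>j\<in>?A. f ((shift^^j) xx)) - f (\<lambda>_. True)\<bar>
          \<le> e + 2*B * real m / real (card ?A)"
    proof (rule mean_bound[where Bad="?Bad"])
      show "card ?A > 0" using nb_pos[of "Suc k"] by simp
      show "\<forall>j\<in>?A. \<bar>f ((shift ^^ j) xx) - f (\<lambda>_. True)\<bar> \<le> 2*B"
        using abs_triangle_ineq4 B(1) by (smt (verit))
      show "\<forall>j\<in>?A. j \<notin> ?Bad \<longrightarrow> \<bar>f ((shift ^^ j) xx) - f (\<lambda>_. True)\<bar> \<le> e"
        using m by (auto simp: shift_pow less_imp_le)
    qed (use e B card in auto)
    then show ?thesis unfolding r_def cA by simp
  qed
  ultimately show "\<exists>r. r \<longlonglongrightarrow> 0 \<and> eventually (\<lambda>k. \<bar>(1 / real (nb (Suc k))) * (\<Sum>j\<in>{nb (Suc k)..<2*nb (Suc k)}. f ((shift^^j) xx)) - f (\<lambda>_. True)\<bar> \<le> e + r k) sequentially"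
    by (intro exI[of _ r]) auto
qed



lemma logconv:
  fixes f :: "cantor \<Rightarrow> real"
  assumes f: "continuous_on UNIV f" "bounded (range f)"
  shows "(\<lambda>N. (1 / ln (real N)) * (\<Sum>j<N. f ((shift^^j) xx) / real (Suc j))) \<longlonglongrightarrow> f (\<lambda>_. False)"
proof (rule approx_tendsto)
  obtain B where B: "\<And>y. \<bar>f y\<bar> \<le> B" "0 \<le> B" using bound_f[OF f(2)] by blast
  fix e :: real assume e: "e > 0"
  then have e2: "e/2 > 0" by simp
  obtain m where m: "\<forall>y. (\<forall>i\<le>m. y i = False) \<longrightarrow> \<bar>f y - f (\<lambda>_. False)\<bar> < e/2"
    using cylinder[OF f(1) e2, of "\<lambda>_. False"] by blast
  define fZ where "fZ = f (\<lambda>_. False)"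
  define h where "h N = harm N / ln (real N)" for N
  define c where "c = 2*B*real(2*m+1)"
  define g where "g N = (sqrt (log 2 (real N + real m)) + 1) / ln (real N)" for N
  define d where "d = \<bar>fZ\<bar> + e/2"
  define r where "r N = c * g N + d * \<bar>h N - 1\<bar>" for N
  have g0: "g \<longlonglongrightarrow> 0" unfolding g_def by real_asymp
  have h1: "h \<longlonglongrightarrow> 1" unfolding h_def by (rule harm_ln)
  have "(\<lambda>N. \<bar>h N - 1\<bar>) \<longlonglongrightarrow> 0" by (intro tendsto_rabs_zero LIM_zero h1)
  then have "r \<longlonglongrightarrow> c * 0 + d * 0" unfolding r_def by (intro tendsto_intros g0)
  then have r0: "r \<longlonglongrightarrow> 0" by simp
  have "eventually (\<lambda>N. \<bar>(1 / ln (real N)) * (\<Sum>j<N. f ((shift^^j) xx) / real (Suc j)) - f (\<lambda>_. False)\<bar> \<le> e + r N) sequentially"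
    using eventually_ge_at_top[of 2]
  proof eventually_elim
    case (elim N)
    define L where "L = ln (real N)"
    have L: "L > 0" unfolding L_def using elim by simp
    define a where "a j = f ((shift^^j) xx)" for j
    define w where "w j = 1 / real (Suc j)" for j
    define Q where "Q = real (2*m+1) * (sqrt (log 2 (real N + real m)) + 1)"
    have harm: "harm N = (\<Sum>j<N. w j)" unfolding w_def harm_altdef by (simp add: inverse_eq_divide)
    have split: "(\<Sum>j<N. a j / real (Suc j)) = (\<Sum>j<N. w j * (a j - fZ)) + fZ * harm N"
    proof -
      have "(\<Sum>j<N. w j * (a j - fZ)) + fZ * (\<Sum>j<N. w j) = (\<Sum>j<N. w j * (a j - fZ) + fZ * w j)"
        by (simp add: sum.distrib sum_distrib_left)
      also have "\<dots> = (\<Sum>j<N. a j / real (Suc j))" by (rule sum.cong) (auto simp: w_def right_diff_distrib)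
      finally show ?thesis unfolding harm by simp
    qed
    have T: "\<bar>\<Sum>j<N. w j * (a j - fZ)\<bar> \<le> e/2 * (\<Sum>j<N. w j) + 2*B * (\<Sum>j\<in>{..<N} \<inter> {j. \<exists>i\<le>m. xx(i+j)}. w j)"
    proof (rule avg_bound)
      show "\<forall>j\<in>{..<N}. \<bar>a j - fZ\<bar> \<le> 2*B"
        unfolding a_def fZ_def using abs_triangle_ineq4 B(1) by (smt (verit))
      show "\<forall>j\<in>{..<N}. j \<notin> {j. \<exists>i\<le>m. xx(i+j)} \<longrightarrow> \<bar>a j - fZ\<bar> \<le> e/2"
        unfolding a_def fZ_def using m by (auto simp: shift_pow less_imp_le)
    qed (use e in \<open>auto simp: w_def\<close>)
    have bs: "(\<Sum>j\<in>{..<N} \<inter> {j. \<exists>i\<le>m. xx(i+j)}. w j) \<le> Q"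
      unfolding w_def Q_def using elim by (intro bs_bound) auto
    have T2: "\<bar>\<Sum>j<N. w j * (a j - fZ)\<bar> \<le> e/2 * harm N + 2*B*Q"
      using T bs B(2) harm by (smt (verit) mult_left_mono)
    have eq: "(1 / L) * (\<Sum>j<N. a j / real (Suc j)) - fZ = (1/L) * (\<Sum>j<N. w j * (a j - fZ)) + fZ * (h N - 1)"
      unfolding split h_def L_def[symmetric] using L by (simp add: field_simps)
    have "\<bar>(1 / L) * (\<Sum>j<N. a j / real (Suc j)) - fZ\<bar> \<le> (1/L) * \<bar>\<Sum>j<N. w j * (a j - fZ)\<bar> + \<bar>fZ\<bar> * \<bar>h N - 1\<bar>"
      unfolding eq using L by (simp add: abs_mult abs_triangle_ineq [THEN order_trans])
    also have "(1/L) * \<bar>\<Sum>j<N. w j * (a j - fZ)\<bar> \<le> (1/L) * (e/2 * harm N + 2*B*Q)"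
      using T2 L by (intro mult_left_mono) auto
    also have "(1/L) * (e/2 * harm N + 2*B*Q) = e/2 * h N + c * g N"
      using L unfolding h_def c_def g_def Q_def L_def by (simp add: field_simps)
    also have "e/2 * h N \<le> e/2 + e/2 * \<bar>h N - 1\<bar>"
    proof -
      have "h N \<le> 1 + \<bar>h N - 1\<bar>" by (cases "h N \<ge> 1") auto
      then have "e/2 * h N \<le> e/2 * (1 + \<bar>h N - 1\<bar>)" using e by (intro mult_left_mono) auto
      then show ?thesis by (simp add: distrib_left)
    qed
    finally have "\<bar>(1 / L) * (\<Sum>j<N. a j / real (Suc j)) - fZ\<bar> \<le> e/2 + r N"
      unfolding r_def d_def by (simp add: algebra_simps)
    then show ?case unfolding L_def a_def fZ_def using e by simp
  qed
  with r0 show "\<exists>r. r \<longlonglongrightarrow> 0 \<and> eventually (\<lambda>N. \<bar>(1 / ln (real N)) * (\<Sum>j<N. f ((shift^^j) xx) / real (Suc j)) - f (\<lambda>_. False)\<bar> \<le> e + r N) sequentially"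
    by blast
qed



lemma nb_strict: "strict_mono (\<lambda>k. nb (Suc k))"
proof (rule strict_monoI_Suc)
  fix k show "nb (Suc k) < nb (Suc (Suc k))" using two_nb_le[of "Suc k"] nb_pos[of "Suc k"] by linarith
qed

lemma nb_strict2: "strict_mono (\<lambda>k. 2 * nb (Suc k))"
proof (rule strict_monoI_Suc)
  fix k show "2 * nb (Suc k) < 2 * nb (Suc (Suc k))" using two_nb_le[of "Suc k"] nb_pos[of "Suc k"] by linarith
qed

lemma Vlog_int:
  fixes f :: "cantor \<Rightarrow> real"
  assumes "\<nu> \<in> V_log xx" "continuous_on UNIV f" "bounded (range f)"
  shows "integral\<^sup>L \<nu> f = f (\<lambda>_. False)"
proof -
  obtain Nk where Nk: "strict_mono Nk" "weak_star_conv (\<lambda>k. Emp_log xx (Nk k)) \<nu>"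
    using assms(1) unfolding V_log_def by blast
  have 1: "(\<lambda>k. integral\<^sup>L (Emp_log xx (Nk k)) f) \<longlonglongrightarrow> integral\<^sup>L \<nu> f"
    using Nk(2) assms(2,3) unfolding weak_star_conv_def by blast
  have "(\<lambda>N. integral\<^sup>L (Emp_log xx N) f) \<longlonglongrightarrow> f (\<lambda>_. False)"
    unfolding emplog_int[OF assms(2)] by (rule logconv[OF assms(2,3)])
  then have "(\<lambda>k. integral\<^sup>L (Emp_log xx (Nk k)) f) \<longlonglongrightarrow> f (\<lambda>_. False)"
    using LIMSEQ_subseq_LIMSEQ[OF _ Nk(1)] by (simp add: o_def)
  then show ?thesis using 1 LIMSEQ_unique by blast
qed

lemma emp2:
  fixes f :: "cantor \<Rightarrow> real"
  assumes f: "continuous_on UNIV f" "bounded (range f)"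
  shows "(\<lambda>k. integral\<^sup>L (Emp xx (2 * nb (Suc k))) f) \<longlonglongrightarrow> (f (\<lambda>_. False) + f (\<lambda>_. True)) / 2"
proof -
  let ?u = "\<lambda>k. (1 / real (nb (Suc k))) * (\<Sum>j<nb (Suc k). f ((shift^^j) xx))"
  let ?v = "\<lambda>k. (1 / real (nb (Suc k))) * (\<Sum>j\<in>{nb (Suc k)..<2*nb (Suc k)}. f ((shift^^j) xx))"
  have A: "(\<lambda>k. (?u k + ?v k) / 2) \<longlonglongrightarrow> (f (\<lambda>_. False) + f (\<lambda>_. True)) / 2"
    by (intro tendsto_intros cesA[OF f] cesB[OF f]) simp
  have E: "integral\<^sup>L (Emp xx (2 * nb (Suc k))) f = (?u k + ?v k) / 2" for k
  proof -
    let ?M = "nb (Suc k)"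
    have "{..<2*?M} = {..<?M} \<union> {?M..<2*?M}" by auto
    then have "(\<Sum>j<2*?M. f ((shift^^j) xx)) = (\<Sum>j\<in>{..<?M} \<union> {?M..<2*?M}. f ((shift^^j) xx))"
      by simp
    also have "\<dots> = (\<Sum>j<?M. f ((shift^^j) xx)) + (\<Sum>j\<in>{?M..<2*?M}. f ((shift^^j) xx))"
      by (rule sum.union_disjoint) auto
    finally have "(\<Sum>j<2*?M. f ((shift^^j) xx)) = (\<Sum>j<?M. f ((shift^^j) xx)) + (\<Sum>j\<in>{?M..<2*?M}. f ((shift^^j) xx))" .
    then show ?thesis unfolding emp_int[OF f(1)] using nb_pos[of "Suc k"] by (simp add: field_simps)
  qed
  have E': "(\<lambda>k. integral\<^sup>L (Emp xx (2 * nb (Suc k))) f) = (\<lambda>k. (?u k + ?v k) / 2)"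
    by (rule ext) (rule E)
  show ?thesis unfolding E' by (rule A)
qed

theorem proposition4p3:
  shows "\<exists>x :: cantor. V_log x \<subset> V x"
proof (intro exI[of _ xx] psubsetI subsetI)
  fix \<nu> assume nu: "\<nu> \<in> V_log xx"
  have "borel_prob \<nu>" using nu unfolding V_log_def by blast
  moreover have "weak_star_conv (\<lambda>k. Emp xx (nb (Suc k))) \<nu>"
    unfolding weak_star_conv_def
  proof (intro allI impI)
    fix f :: "cantor \<Rightarrow> real" assume f: "continuous_on UNIV f \<and> bounded (range f)"
    show "(\<lambda>k. integral\<^sup>L (Emp xx (nb (Suc k))) f) \<longlonglongrightarrow> integral\<^sup>L \<nu> f"
      unfolding emp_int[OF conjunct1[OF f]] Vlog_int[OF nu conjunct1[OF f] conjunct2[OF f]]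
      using cesA f by blast
  qed
  ultimately show "\<nu> \<in> V xx" unfolding V_def using nb_strict by blast
next
  define g :: "nat \<Rightarrow> cantor" where "g n = (if n = 0 then (\<lambda>_. False) else (\<lambda>_. True))" for n
  define nu where "nu = distr (uniform_count_measure {0::nat,1}) borel g"
  have meas: "g \<in> measurable (uniform_count_measure {0::nat,1}) borel"
    unfolding uniform_count_measure_def by simp
  have "prob_space (uniform_count_measure {0::nat,1})" by (rule prob_space_uniform_count_measure) auto
  then have "prob_space nu" unfolding nu_def by (rule prob_space.prob_space_distr[OF _ meas])
  then have prob: "borel_prob nu" unfolding borel_prob_def nu_def by simp
  have nuint: "integral\<^sup>L nu f = (f (\<lambda>_. False) + f (\<lambda>_. True)) / 2" if f: "continuous_on UNIV f" for f :: "cantor \<Rightarrow> real"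
  proof -
    have "integral\<^sup>L nu f = integral\<^sup>L (uniform_count_measure {0::nat,1}) (\<lambda>n. f (g n))"
      unfolding nu_def by (rule integral_distr[OF meas borel_measurable_continuous_onI[OF f]])
    also have "\<dots> = (\<Sum>n\<in>{0::nat,1}. f (g n)) / card {0::nat,1}"
      by (rule integral_uniform_count_measure) simp
    also have "\<dots> = (f (\<lambda>_. False) + f (\<lambda>_. True)) / 2" by (simp add: g_def)
    finally show ?thesis .
  qed
  have "nu \<in> V xx"
    unfolding V_def
  proof (intro CollectI conjI exI[of _ "\<lambda>k. 2 * nb (Suc k)"] prob nb_strict2)
    show "weak_star_conv (\<lambda>k. Emp xx (2 * nb (Suc k))) nu"
      unfolding weak_star_conv_def
    proof (intro allI impI)
      fix f :: "cantor \<Rightarrow> real" assume f: "continuous_on UNIV f \<and> bounded (range f)"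
      have nueq: "integral\<^sup>L nu f = (f (\<lambda>_. False) + f (\<lambda>_. True)) / 2" using f nuint by blast
      show "(\<lambda>k. integral\<^sup>L (Emp xx (2 * nb (Suc k))) f) \<longlonglongrightarrow> integral\<^sup>L nu f"
        unfolding nueq using emp2[of f] f by blast
    qed
  qed
  moreover have "nu \<notin> V_log xx"
  proof
    assume "nu \<in> V_log xx"
    define f :: "cantor \<Rightarrow> real" where "f y = (if y 0 then 1 else 0)" for y
    have fc: "continuous_on UNIV f"
    proof -
      have "continuous_on UNIV ((\<lambda>b::bool. if b then 1 else (0::real)) \<circ> (\<lambda>y::cantor. y 0))"
        by (rule continuous_on_compose[OF continuous_on_product_coordinates Topological_Spaces.continuous_on_discrete])
      then show ?thesis unfolding f_def o_def .
    qed
    have fb: "bounded (range f)"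
      by (rule finite_imp_bounded, rule finite_subset[of _ "{0,1}"]) (auto simp: f_def)
    have "integral\<^sup>L nu f = f (\<lambda>_. False)" by (rule Vlog_int) fact+
    then show False using nuint[OF fc] by (simp add: f_def)
  qed
  ultimately show "V_log xx \<noteq> V xx" by blast
qed

end
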